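(* Let $r\ge1$ be an integer and, for integers $m\ge0$, let $S_{r,m}=\sum_{k=0}^{m}J_{rk}^{(3)}$. Define the $4\times4$ matrices $$A_{r}=\begin{pmatrix} 1&0&0&0\\ 1&2^{r}+\epsilon_{r}&-(2^{r}\epsilon_{r}+1)&2^{r}\\0&1&0&0\\ 0&0&1&0 \end{pmatrix},\quad Q_{r,n}=\begin{pmatrix} J_{r}^{(3)}+2^{r}J_{-r}^{(3)}&0&0&0\\ S_{r,n}&J_{r(n+1)}^{(3)}&K_{r,n}^{(3)}&2^{r}J_{rn}^{(3)}\\S_{r,n-1}&J_{rn}^{(3)}&K_{r,n-1}^{(3)}&2^{r}J_{r(n-1)}^{(3)}\\ S_{r,n-2}&J_{r(n-1)}^{(3)}&K_{r,n-2}^{(3)}&2^{r}J_{r(n-2)}^{(3)} \end{pmatrix},$$ where $K_{r,m}^{(3)}=-(2^{r}\epsilon_{r}+1)J_{rm}^{(3)}+2^{r}J_{r(m-1)}^{(3)}$. Then for every integer $n\ge2$, $$J_{r}^{(3)}A_{r}^{n}+2^{r}J_{-r}^{(3)}A_{r}^{n-1}=Q_{r,n}.$$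
   Context: The third order Jacobsthal numbers are defined by $J_0^{(3)}=0$, $J_1^{(3)}=J_2^{(3)}=1$ and $J_{n+3}^{(3)}=J_{n+2}^{(3)}+J_{n+1}^{(3)}+2J_n^{(3)}$ for $n\ge0$, and are extended to all negative indices by running the recurrence backwards, i.e. $J_{n}^{(3)}=\tfrac12\big(J_{n+3}^{(3)}-J_{n+2}^{(3)}-J_{n+1}^{(3)}\big)$ for all $n<0$ (so $J_{-1}^{(3)}=0$, $J_{-2}^{(3)}=\tfrac12$, $J_{-3}^{(3)}=-\tfrac14$). Let $\omega_1=\frac{-1+\sqrt{-3}}{2}$, $\omega_2=\frac{-1-\sqrt{-3}}{2}$ be the roots of $x^2+x+1=0$ and $\epsilon_r=\omega_1^r+\omega_2^r$ (equal to $2$ if $3\mid r$, and $-1$ otherwise). *)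

theory Defs
  imports Complex_Main "Jordan_Normal_Form.Matrix"
begin

function J3 :: "int \<Rightarrow> real" where
  "J3 n = (if n = 0 then 0
           else if n = 1 \<or> n = 2 then 1
           else if n \<ge> 3 then J3 (n - 1) + J3 (n - 2) + 2 * J3 (n - 3)
           else (J3 (n + 3) - J3 (n + 2) - J3 (n + 1)) / 2)"
  by auto
termination
  by (relation "measure (\<lambda>n. if n \<ge> 0 then nat (2 * n) else nat (10 - 2 * n))") auto

declare J3.simps [simp del]

definition omega1 :: complex where "omega1 = (-1 + \<i> * sqrt 3) / 2"
definition omega2 :: complex where "omega2 = (-1 - \<i> * sqrt 3) / 2"

definition eps :: "nat \<Rightarrow> complex" where "eps r = omega1 ^ r + omega2 ^ r"

text \<open>Matrix entries are complex (epsilon is defined as a complex number);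
  J values are embedded via of_real.\<close>
definition Jc :: "int \<Rightarrow> complex" where "Jc k = of_real (J3 k)"

definition S :: "nat \<Rightarrow> nat \<Rightarrow> complex" where
  "S r m = (\<Sum>k = 0..m. Jc (int r * int k))"

definition K :: "nat \<Rightarrow> int \<Rightarrow> complex" where
  "K r m = - (2 ^ r * eps r + 1) * Jc (int r * m) + 2 ^ r * Jc (int r * (m - 1))"

definition A_mat :: "nat \<Rightarrow> complex mat" where
  "A_mat r = mat_of_rows_list 4
     [[1, 0, 0, 0],
      [1, 2 ^ r + eps r, - (2 ^ r * eps r + 1), 2 ^ r],
      [0, 1, 0, 0],
      [0, 0, 1, 0]]"

definition Q_mat :: "nat \<Rightarrow> nat \<Rightarrow> complex mat" where
  "Q_mat r n = mat_of_rows_list 4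
     [[Jc (int r) + 2 ^ r * Jc (- int r), 0, 0, 0],
      [S r n, Jc (int r * (int n + 1)), K r (int n), 2 ^ r * Jc (int r * int n)],
      [S r (n - 1), Jc (int r * int n), K r (int n - 1), 2 ^ r * Jc (int r * (int n - 1))],
      [S r (n - 2), Jc (int r * (int n - 1)), K r (int n - 2), 2 ^ r * Jc (int r * (int n - 2))]]"

end

theory Submission imports Defs begin

definition V :: "int \<Rightarrow> real" where
  "V k = (if k mod 3 = 0 then 2 else if k mod 3 = 1 then -3 else 1)"

lemma V_eq: "V k = (if k mod 3 = 0 then 2 else if k mod 3 = 1 then -3 else 1)" by (simp add: V_def)

lemma J3_closed: "J3 k = (2 * (2::real) powi k - V k) / 7"
proof (induction k rule: J3.induct)
  case (1 n)
  have p: "(2::real) powi n = 2 powi (n - j) * 2 ^ nat j" if "j \<ge> 0" for j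
    using that by (simp add: power_int_add[symmetric] flip: power_int_of_nat)
  have q: "(2::real) powi (n + j) = 2 powi n * 2 ^ nat j" if "j \<ge> 0" for j
    using that by (simp add: power_int_add flip: power_int_of_nat)
  have m: "(n-1) mod 3 = (n+2) mod 3" "(n-2) mod 3 = (n+1) mod 3" "(n-3) mod 3 = n mod 3"
     "(n+3) mod 3 = n mod 3"  by presburger+
  have c: "n mod 3 = 0 \<or> n mod 3 = 1 \<or> n mod 3 = 2" by presburger
  have m2: "(n+2) mod 3 = (if n mod 3 = 0 then 2 else if n mod 3 = 1 then 0 else 1)"
           "(n+1) mod 3 = (if n mod 3 = 0 then 1 else if n mod 3 = 1 then 2 else 0)" by presburger+
  consider "n = 0" | "n = 1" | "n = 2" | "n \<ge> 3" | "n < 0" by linarith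
  then show ?case
  proof cases
    case 4
    have e: "J3 n = J3 (n - 1) + J3 (n - 2) + 2 * J3 (n - 3)" using 4 by (subst J3.simps) simp
    show ?thesis using 1(1,2,3) 4 unfolding e using p[of 3] p[of 2] p[of 1] c
      unfolding V_eq m m2 by auto
  next
    case 5
    have e: "J3 n = (J3 (n + 3) - J3 (n + 2) - J3 (n + 1)) / 2" using 5 by (subst J3.simps) simp
    show ?thesis using 1(4,5,6) 5 unfolding e using q[of 3] q[of 2] q[of 1] c
      unfolding V_eq m m2 by auto
  qed (subst J3.simps, simp add: V_def)+
qed


lemma V_period: "V (k + 3) = V k"
proof -
  have "(k + 3) mod 3 = k mod 3" by simp
  then show ?thesis unfolding V_def by simp
qed

lemma V_dvd: "(3::int) dvd a \<Longrightarrow> V (a * k) = 2"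
proof -
  assume "(3::int) dvd a"
  then have "(a * k) mod 3 = 0" by auto
  then show ?thesis unfolding V_eq by simp
qed

lemma mod3_cases: "(x::int) mod 3 = 0 \<or> x mod 3 = 1 \<or> x mod 3 = 2" by arith

lemma V_sum: assumes "\<not> (3::int) dvd a" shows "V (a * m) + V (a * (m+1)) + V (a * (m+2)) = 0"
proof -
  have e: "(a * (m + j)) mod 3 = ((a mod 3) * (((m mod 3) + j) mod 3)) mod 3" for j
    by (simp add: mod_mult_eq mod_add_left_eq)
  have e0: "(a * m) mod 3 = ((a mod 3) * ((m mod 3) mod 3)) mod 3" by (simp add: mod_mult_eq)
  have ca: "a mod 3 = 1 \<or> a mod 3 = 2" using assms mod3_cases[of a] by auto
  show ?thesis unfolding V_eq e[of 1] e[of 2] e0 using ca mod3_cases[of m]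
    by (elim disjE) simp_all
qed

lemma alg1: "(2 * (X * y^3) - v) / 7 = (y + 2) * ((2 * (X * y^2) - v) / 7)
   - (y * 2 + 1) * ((2 * (X * y) - v) / 7) + y * ((2 * X - v) / 7)" for X y v :: real
  by (simp add: field_simps power2_eq_square power3_eq_cube)

lemma alg2: "v0 + v1 + v2 = 0 \<Longrightarrow> (2 * (X * y^3) - v0) / 7 = (y + -1) * ((2 * (X * y^2) - v2) / 7)
   - (y * -1 + 1) * ((2 * (X * y) - v1) / 7) + y * ((2 * X - v0) / 7)" for X y v0 v1 v2 :: real
proof -
  assume "v0 + v1 + v2 = 0"
  then have h: "v0 = - v1 - v2" by simp
  show ?thesis by (simp only: h) (simp add: field_simps power2_eq_square power3_eq_cube)
qed

definition epsr :: "nat \<Rightarrow> real" where "epsr r = (if 3 dvd r then 2 else -1)"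

lemma J3_rec: fixes r :: nat and m :: int
  shows "J3 (int r * (m + 3)) = (2 ^ r + epsr r) * J3 (int r * (m + 2))
     - (2 ^ r * epsr r + 1) * J3 (int r * (m + 1)) + 2 ^ r * J3 (int r * m)"
proof -
  define X where "X = (2::real) powi (int r * m)"
  define y where "y = (2::real) ^ r"
  have P: "(2::real) powi (int r * (m + int j)) = X * y ^ j" for j
  proof -
    have "int r * (m + int j) = int r * m + int r * int j" by (rule distrib_left)
    then have "(2::real) powi (int r * (m + int j)) = 2 powi (int r * m) * 2 powi (int r * int j)"
      using power_int_add[of "2::real" "int r * m" "int r * int j"] by simp
    also have "(2::real) powi (int r * int j) = y ^ j" unfolding y_def
    proof -
      have "(2::real) powi (int r * int j) = 2 powi (int (r * j))" by simp
      also have "\<dots> = 2 ^ (r * j)" by (rule power_int_of_nat)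
      finally show "(2::real) powi (int r * int j) = (2 ^ r) ^ j" by (simp add: power_mult)
    qed
    finally show ?thesis unfolding X_def .
  qed
  have P3: "(2::real) powi (int r * (m + 3)) = X * y ^ 3" using P[of 3] by simp
  have P2: "(2::real) powi (int r * (m + 2)) = X * y ^ 2" using P[of 2] by simp
  have P1: "(2::real) powi (int r * (m + 1)) = X * y" using P[of 1] by simp
  have V3: "V (int r * (m + 3)) = V (int r * m)"
  proof -
    have "int r * (m + 3) = int r * m + 3 * int r" by (simp add: algebra_simps)
    then show ?thesis unfolding V_def by simp
  qed
  show ?thesis
  proof (cases "3 dvd r")
    case True
    hence d: "(3::int) dvd int r" by (metis of_nat_numeral int_dvd_int_iff)
    have e: "epsr r = 2" using True by (simp add: epsr_def)
    show ?thesis unfolding J3_closed P3 P2 P1 V_dvd[OF d] y_def[symmetric] X_def[symmetric] e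
      by (rule alg1)
  next
    case False
    hence d: "\<not> (3::int) dvd int r" by (metis of_nat_numeral int_dvd_int_iff)
    have s: "V (int r * m) + V (int r * (m+1)) + V (int r * (m+2)) = 0" by (rule V_sum[OF d])
    have e: "epsr r = -1" using False by (simp add: epsr_def)
    show ?thesis unfolding J3_closed P3 P2 P1 V3 y_def[symmetric] X_def[symmetric] e
      by (rule alg2[OF s])
  qed
qed

lemma omega12: "omega1 * omega2 = 1" "omega1 + omega2 = -1" "omega1^2 = omega2" "omega2^2 = omega1"
  by (simp_all add: omega1_def omega2_def field_simps algebra_simps power2_eq_square complex_eq_iff)

lemma omega_cube: "omega1^3 = 1" "omega2^3 = 1"
proof -
  show "omega1^3 = 1" using omega12 by (metis power2_eq_square power3_eq_cube mult.commute)
  show "omega2^3 = 1" using omega12 by (metis power2_eq_square power3_eq_cube)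
qed

lemma eps_eq: "eps r = of_real (epsr r)"
proof -
  have d: "r = 3 * (r div 3) + r mod 3" by simp
  have p1: "omega1 ^ r = omega1 ^ (r mod 3)"
    by (subst d, simp only: power_add power_mult omega_cube, simp)
  have p2: "omega2 ^ r = omega2 ^ (r mod 3)"
    by (subst d, simp only: power_add power_mult omega_cube, simp)
  have c: "r mod 3 = 0 \<or> r mod 3 = 1 \<or> r mod 3 = 2" by arith
  show ?thesis unfolding eps_def p1 p2 epsr_def using c omega12
    by (elim disjE) (auto simp: dvd_eq_mod_eq_0 add.commute)
qed

lemma less4: "(i::nat) < 4 \<Longrightarrow> i = 0 \<or> i = 1 \<or> i = 2 \<or> i = 3" by arith

lemma sum4: "(\<Sum>k = 0..<4. f k) = f 0 + f 1 + f 2 + f (3::nat)"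
  by (simp add: numeral_eq_Suc)

lemma A_carrier: "A_mat r \<in> carrier_mat 4 4"
  unfolding A_mat_def mat_of_rows_list_def carrier_mat_def by (simp add: numeral_eq_Suc)

lemma mult_A:
  "mat_of_rows_list 4 [[p0,p1,p2,p3],[q0,q1,q2,q3],[u0,u1,u2,u3],[w0,w1,w2,w3]] * A_mat r =
   mat_of_rows_list 4 [[p0+p1, (2^r+eps r)*p1+p2, -(2^r*eps r+1)*p1+p3, 2^r*p1],
                       [q0+q1, (2^r+eps r)*q1+q2, -(2^r*eps r+1)*q1+q3, 2^r*q1],
                       [u0+u1, (2^r+eps r)*u1+u2, -(2^r*eps r+1)*u1+u3, 2^r*u1],
                       [w0+w1, (2^r+eps r)*w1+w2, -(2^r*eps r+1)*w1+w3, 2^r*w1]]"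
  (is "?L = ?R")
proof (rule eq_matI)
  fix i j assume i: "i < dim_row ?R" and j: "j < dim_col ?R"
  then have i4: "i < 4" and j4: "j < 4" by (simp_all add: mat_of_rows_list_def)
  show "?L $$ (i, j) = ?R $$ (i, j)"
    using less4[OF i4] less4[OF j4]
    by (elim disjE) (simp_all add: A_mat_def mat_of_rows_list_def scalar_prod_def sum4 row_def col_def)
qed (simp_all add: A_mat_def mat_of_rows_list_def)

lemma lin_comb:
  "x \<cdot>\<^sub>m mat_of_rows_list 4 [[p0,p1,p2,p3],[q0,q1,q2,q3],[u0,u1,u2,u3],[w0,w1,w2,w3]] +
   y \<cdot>\<^sub>m mat_of_rows_list 4 [[p0',p1',p2',p3'],[q0',q1',q2',q3'],[u0',u1',u2',u3'],[w0',w1',w2',w3']] =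
   mat_of_rows_list 4 [[x*p0+y*p0',x*p1+y*p1',x*p2+y*p2',x*p3+y*p3'],
     [x*q0+y*q0',x*q1+y*q1',x*q2+y*q2',x*q3+y*q3'],
     [x*u0+y*u0',x*u1+y*u1',x*u2+y*u2',x*u3+y*u3'],
     [x*w0+y*w0',x*w1+y*w1',x*w2+y*w2',x*w3+y*w3']]"
  (is "?L = ?R")
proof (rule eq_matI)
  fix i j assume i: "i < dim_row ?R" and j: "j < dim_col ?R"
  then have i4: "i < 4" and j4: "j < 4" by (simp_all add: mat_of_rows_list_def)
  show "?L $$ (i, j) = ?R $$ (i, j)"
    using less4[OF i4] less4[OF j4] i4 j4
    by (elim disjE) (simp_all add: mat_of_rows_list_def)
qed (simp_all add: mat_of_rows_list_def)

lemma Jc_rec: "Jc (int r * (m + 3)) = (2^r+eps r) * Jc (int r*(m+2))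
   + (-(2^r*eps r+1)) * Jc (int r*(m+1)) + 2^r * Jc (int r*m)"
  unfolding Jc_def eps_eq J3_rec by (simp add: algebra_simps)

definition Rw :: "nat \<Rightarrow> complex \<Rightarrow> int \<Rightarrow> complex list" where
  "Rw r s m = [s, Jc (int r * (m + 1)), K r m, 2 ^ r * Jc (int r * m)]"

definition RwA :: "nat \<Rightarrow> complex \<Rightarrow> int \<Rightarrow> complex list" where
  "RwA r s m = [s + Jc (int r * (m + 1)), (2^r+eps r) * Jc (int r * (m + 1)) + K r m,
     -(2^r*eps r+1) * Jc (int r * (m + 1)) + 2 ^ r * Jc (int r * m), 2^r * Jc (int r * (m + 1))]"

lemma rowstep: "RwA r s m = Rw r (s + Jc (int r * (m + 1))) (m + 1)"
proof -
  have h: "m - 1 + 3 = m + 1 + 1" "m - 1 + 2 = m + 1" "m - 1 + 1 = m" "m + 1 - 1 = m" by simp_all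
  have e: "Jc (int r * (m + 1 + 1)) = (2^r+eps r) * Jc (int r*(m+1))
   + (-(2^r*eps r+1)) * Jc (int r*m) + 2^r * Jc (int r*(m - 1))"
    using Jc_rec[of r "m - 1"] unfolding h .
  show ?thesis unfolding RwA_def Rw_def K_def e h(4) by (simp add: algebra_simps)
qed

lemma S_Suc: "S r (Suc k) = S r k + Jc (int r * int (Suc k))"
  unfolding S_def by simp

lemma QR: "Q_mat r n = mat_of_rows_list 4 [[Jc (int r) + 2 ^ r * Jc (- int r), 0, 0, 0],
   Rw r (S r n) (int n), Rw r (S r (n-1)) (int n - 1), Rw r (S r (n-2)) (int n - 2)]"
  unfolding Q_mat_def Rw_def by simp

lemma Qstep: assumes "n \<ge> 2" shows "Q_mat r n * A_mat r = Q_mat r (Suc n)"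
proof -
  obtain k where n: "n = Suc (Suc k)" using assms by (metis add_2_eq_Suc le_Suc_ex)
  let ?q = "Jc (int r) + 2 ^ r * Jc (- int r)"
  have "Q_mat r n * A_mat r = mat_of_rows_list 4 [[?q + 0, (2^r+eps r) * 0 + 0, -(2^r*eps r+1) * 0 + 0, 2^r * 0],
     RwA r (S r n) (int n), RwA r (S r (n-1)) (int n - 1), RwA r (S r (n-2)) (int n - 2)]"
    unfolding QR RwA_def Rw_def by (rule mult_A)
  also have "\<dots> = mat_of_rows_list 4 [[?q, 0, 0, 0],
     Rw r (S r n + Jc (int r * (int n + 1))) (int n + 1),
     Rw r (S r (n-1) + Jc (int r * (int n - 1 + 1))) (int n - 1 + 1),
     Rw r (S r (n-2) + Jc (int r * (int n - 2 + 1))) (int n - 2 + 1)]"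
    unfolding rowstep by simp
  also have "\<dots> = Q_mat r (Suc n)"
  proof -
    have a: "S r n + Jc (int r * (int n + 1)) = S r (Suc n)" unfolding S_Suc by (simp add: add.commute)
    have b: "S r (n-1) + Jc (int r * (int n - 1 + 1)) = S r (Suc n - 1)" unfolding n by (simp add: S_Suc algebra_simps)
    have c: "S r (n-2) + Jc (int r * (int n - 2 + 1)) = S r (Suc n - 2)" unfolding n by (simp add: S_Suc algebra_simps)
    have d: "int n + 1 = int (Suc n)" "int n - 1 + 1 = int (Suc n) - 1" "int n - 2 + 1 = int (Suc n) - 2"
      by simp_all
    show ?thesis unfolding a b c unfolding d QR[of r "Suc n"] ..
  qed
  finally show ?thesis .
qed

lemma base2: "Jc (int r) \<cdot>\<^sub>m (A_mat r ^\<^sub>m 2) + (2 ^ r * Jc (- int r)) \<cdot>\<^sub>m (A_mat r ^\<^sub>m 1) = Q_mat r 2"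
proof -
  have p2: "A_mat r ^\<^sub>m 2 = A_mat r * A_mat r" and p1: "A_mat r ^\<^sub>m 1 = A_mat r"
    using A_carrier[of r] by (simp_all add: numeral_eq_Suc)
  have r1: "Jc (int r * 2) = (2^r+eps r) * Jc (int r) + 2^r * Jc (- int r)"
    using Jc_rec[of r "-1"] by (simp add: Jc_def J3.simps[of 0])
  have r2: "Jc (int r * 3) = (2^r+eps r) * Jc (int r * 2) + (-(2^r*eps r+1)) * Jc (int r)"
    using Jc_rec[of r 0] by (simp add: Jc_def J3.simps[of 0])
  have j0: "Jc 0 = 0" by (simp add: Jc_def J3.simps[of 0])
  have AA: "A_mat r * A_mat r = (mat_of_rows_list 4 [[1,0,0,0],[1,2^r+eps r,-(2^r*eps r+1),2^r],[0,1,0,0],[0,0,1,0]]) * A_mat r"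
    by (simp add: A_mat_def)
  show ?thesis unfolding p2 p1 AA mult_A
    unfolding A_mat_def lin_comb
    unfolding Q_mat_def S_def K_def
    by (simp add: j0 r1 r2 algebra_simps numeral_eq_Suc)
qed

theorem theorem1:
  fixes r n :: nat
  assumes "r \<ge> 1" and "n \<ge> 2"
  shows "Jc (int r) \<cdot>\<^sub>m (A_mat r ^\<^sub>m n)
           + (2 ^ r * Jc (- int r)) \<cdot>\<^sub>m (A_mat r ^\<^sub>m (n - 1)) = Q_mat r n"
  using assms(2)
proof (induction n rule: nat_induct_at_least)
  case base
  show ?case using base2 by simp
next
  case (Suc n)
  have A: "A_mat r \<in> carrier_mat 4 4" by (rule A_carrier)
  have sn: "Suc n - 1 = Suc (n - 1)" using Suc(1) by simp
  have "Jc (int r) \<cdot>\<^sub>m (A_mat r ^\<^sub>m Suc n) + (2 ^ r * Jc (- int r)) \<cdot>\<^sub>m (A_mat r ^\<^sub>m (Suc n - 1))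
      = (Jc (int r) \<cdot>\<^sub>m (A_mat r ^\<^sub>m n) + (2 ^ r * Jc (- int r)) \<cdot>\<^sub>m (A_mat r ^\<^sub>m (n - 1))) * A_mat r"
    unfolding sn pow_mat.simps
    using A by (simp add: add_mult_distrib_mat[of _ 4 4 _ _ 4] mult_smult_assoc_mat[of _ 4 4 _ 4])
  also have "\<dots> = Q_mat r (Suc n)" unfolding Suc(2) using Qstep[OF Suc(1)] .
  finally show ?case .
qed
end
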